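(* Let $\|\cdot\|$ be any norm on $\mathbb{R}^d$, let $m\geq 2$, and let $M$ be a non-empty finite set of $m$-gons in $\mathbb{R}^d$. Let $\mathcal{H}(M)$ be the hypergraph with vertex set $\mathbb{R}^d$ and edge set $\{X\subseteq\mathbb{R}^d\mid X \text{ is congruent in } (\mathbb{R}^d,\|\cdot\|) \text{ to some } T\in M\}$. Then there exists a finite set $S$ of $(m+1)$-gons in $\mathbb{R}^d$ such that $\mathcal{H}(M)$ is equivalent to the $(m+1)$-uniform hypergraph $\mathcal{H}(S)$ with vertex set $\mathbb{R}^d$ and edge set $\{Y\subseteq\mathbb{R}^d\mid Y\text{ is congruent in } (\mathbb{R}^d,\|\cdot\|) \text{ to some element of } S\}$.
   Context: Two sets $X,Y\subseteq\mathbb{R}^d$ are congruent in $(\mathbb{R}^d,\|\cdot\|)$ iff one is the image of the other under a composition, in either order, of a surjective linear isometry of $(\mathbb{R}^d,\|\cdot\|)$ and a translation. An $m$-gon is any subset of $\mathbb{R}^d$ of cardinality exactly $m$. A hypergraph is $(V,E)$ with edges subsets of $V$ of size at least $2$; a proper coloring $\varphi:V\to C$ makes no edge monochromatic; $\chi$ is the least $|C|$ admitting a proper coloring. Two hypergraphs $\mathcal{H},\mathcal{G}$ on the same vertex set are equivalent if $\chi(\mathcal{H})=\chi(\mathcal{G})$ and, for every set $C$ of that cardinality, a map into $C$ is a proper coloring of $\mathcal{H}$ iff it is a proper coloring of $\mathcal{G}$. *)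

theory Defs
  imports "HOL-Analysis.Analysis"
begin

definition is_norm :: "('a::real_vector \<Rightarrow> real) \<Rightarrow> bool" where
  "is_norm N \<longleftrightarrow> (\<forall>x. N x = 0 \<longleftrightarrow> x = 0) \<and> (\<forall>x y. N (x + y) \<le> N x + N y)
     \<and> (\<forall>c x. N (c *\<^sub>R x) = \<bar>c\<bar> * N x)"

definition lin_isometry :: "('a::real_vector \<Rightarrow> real) \<Rightarrow> ('a \<Rightarrow> 'a) \<Rightarrow> bool" where
  "lin_isometry N L \<longleftrightarrow> linear L \<and> surj L \<and> (\<forall>x. N (L x) = N x)"

definition congruent_in :: "('a::real_vector \<Rightarrow> real) \<Rightarrow> 'a set \<Rightarrow> 'a set \<Rightarrow> bool" where
  "congruent_in N X Y \<longleftrightarrow> (\<exists>L t. lin_isometry N L \<and>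
      (Y = (\<lambda>x. L x + t) ` X \<or> Y = (\<lambda>x. L (x + t)) ` X \<or>
       X = (\<lambda>x. L x + t) ` Y \<or> X = (\<lambda>x. L (x + t)) ` Y))"

definition is_gon :: "nat \<Rightarrow> 'a set \<Rightarrow> bool" where
  "is_gon m X \<longleftrightarrow> finite X \<and> card X = m"

definition cong_edges :: "('a::real_vector \<Rightarrow> real) \<Rightarrow> 'a set set \<Rightarrow> 'a set set" where
  "cong_edges N M = {X. \<exists>T\<in>M. congruent_in N X T}"

definition hypergraph :: "'v set \<Rightarrow> 'v set set \<Rightarrow> bool" where
  "hypergraph V E \<longleftrightarrow> (\<forall>e\<in>E. e \<subseteq> V \<and> \<not> (finite e \<and> card e < 2))"

definition proper_coloring :: "'v set \<Rightarrow> 'v set set \<Rightarrow> 'c set \<Rightarrow> ('v \<Rightarrow> 'c) \<Rightarrow> bool" where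
  "proper_coloring V E C \<phi> \<longleftrightarrow> (\<forall>v\<in>V. \<phi> v \<in> C) \<and> (\<forall>e\<in>E. \<exists>x\<in>e. \<exists>y\<in>e. \<phi> x \<noteq> \<phi> y)"

definition colorable_with :: "'v set \<Rightarrow> 'v set set \<Rightarrow> 'c set \<Rightarrow> bool" where
  "colorable_with V E C \<longleftrightarrow> (\<exists>\<phi>. proper_coloring V E C \<phi>)"

text \<open>Competitor colour sets range over subsets of the vertex type; this suffices
  since any proper colouring uses at most |V| colours.\<close>
definition has_chromatic_card :: "'v set \<Rightarrow> 'v set set \<Rightarrow> 'c set \<Rightarrow> bool" where
  "has_chromatic_card V E C \<longleftrightarrow> colorable_with V E C \<and>
     (\<forall>D::'v set. colorable_with V E D \<longrightarrow> (card_of C, card_of D) \<in> ordLeq)"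

text \<open>Colour sets are
  taken as sets of the vertex type: every colour set of cardinality chi (which is
  at most |V|) is in bijection with such a set, and properness is invariant
  under renaming colours.\<close>
definition hg_equivalent :: "'v set \<Rightarrow> 'v set set \<Rightarrow> 'v set set \<Rightarrow> bool" where
  "hg_equivalent V E1 E2 \<longleftrightarrow>
     (\<forall>D::'v set. has_chromatic_card V E1 D \<longleftrightarrow> has_chromatic_card V E2 D) \<and>
     (\<forall>(C::'v set) (\<phi>::'v \<Rightarrow> 'v). has_chromatic_card V E1 C \<longrightarrow>
          (proper_coloring V E1 C \<phi> \<longleftrightarrow> proper_coloring V E2 C \<phi>))"

end

theory Submission
  imports Defs "HOL-Analysis.Analysis"
begin

lemma compactness_coloring:
  fixes E :: "'v set set" and n :: nat
  assumes fin: "\<forall>e\<in>E. finite e" and n: "n > 0"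
  and loc: "\<forall>A. finite A \<longrightarrow> (\<exists>\<theta>::'v\<Rightarrow>nat. (\<forall>x\<in>A. \<theta> x < n) \<and> (\<forall>e\<in>E. e \<subseteq> A \<longrightarrow> (\<exists>x\<in>e. \<exists>y\<in>e. \<theta> x \<noteq> \<theta> y)))"
  shows "\<exists>\<theta>::'v\<Rightarrow>nat. (\<forall>x. \<theta> x < n) \<and> (\<forall>e\<in>E. \<exists>x\<in>e. \<exists>y\<in>e. \<theta> x \<noteq> \<theta> y)"
proof -
  define K :: "('v \<Rightarrow> nat) set" where "K = PiE UNIV (\<lambda>_. {..<n})"
  have "compactin (product_topology (\<lambda>_. euclidean) UNIV) K"
    unfolding K_def by (subst compactin_PiE) (auto intro: finite_imp_compact)
  then have cK: "compact K" by (simp add: euclidean_product_topology)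
  define F where "F e = K \<inter> {\<theta>::'v\<Rightarrow>nat. \<exists>x\<in>e. \<exists>y\<in>e. \<theta> x \<noteq> \<theta> y}" for e
  have clF: "closed (F e)" if "e \<in> E" for e
  proof -
    define I where "I = {(x,y,a,b). x\<in>e \<and> y\<in>e \<and> a<n \<and> b<n \<and> a\<noteq>b}"
    have "I \<subseteq> e \<times> e \<times> {..<n} \<times> {..<n}" unfolding I_def by auto
    then have fI: "finite I" using fin that by (meson finite_SigmaI finite_lessThan finite_subset)
    have cl: "closed {\<theta>::'v\<Rightarrow>nat. \<theta> x = a \<and> \<theta> y = b}" for x y a b
    proof -
      have "{\<theta>::'v\<Rightarrow>nat. \<theta> x = a \<and> \<theta> y = b} = {\<theta>. \<theta> x = a} \<inter> {\<theta>. \<theta> y = b}" by auto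
      moreover have "closed {\<theta>::'v\<Rightarrow>nat. \<theta> x = a}" for x a
        by (rule closed_Collect_eq) (auto intro: continuous_on_const)
      ultimately show ?thesis by auto
    qed
    have Fe: "F e = K \<inter> (\<Union>(x,y,a,b)\<in>I. {\<theta>. \<theta> x = a \<and> \<theta> y = b})"
      unfolding F_def I_def K_def by (auto simp: PiE_iff) blast
    have "K = (\<Inter>x. {\<theta>::'v\<Rightarrow>nat. \<theta> x \<le> n - 1})" unfolding K_def using n by (auto simp: PiE_iff) (metis Suc_pred le_simps(2))+
    moreover have "closed {\<theta>::'v\<Rightarrow>nat. \<theta> x \<le> n - 1}" for x
      by (rule closed_Collect_le) (auto intro: continuous_on_const)
    ultimately have "closed K" by auto
    show ?thesis unfolding Fe
      apply (rule closed_Int[OF \<open>closed K\<close>])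
      apply (rule closed_UN[OF fI])
      using cl by (clarsimp split: prod.splits)
  qed
  have "K \<inter> \<Inter>(F ` E) \<noteq> {}"
  proof (rule compact_imp_fip[OF cK])
    show "closed T" if "T \<in> F ` E" for T using that clF by auto
    fix F' assume F': "finite F'" "F' \<subseteq> F ` E"
    then obtain E' where E': "E' \<subseteq> E" "finite E'" "F' = F ` E'" using finite_subset_image[OF F'(1,2)] by blast
    define A where "A = \<Union>E'"
    have "finite A" unfolding A_def using E' fin by auto
    from loc[rule_format, OF this] obtain \<theta> where th: "\<forall>x\<in>A. \<theta> x < n" "\<forall>e\<in>E. e \<subseteq> A \<longrightarrow> (\<exists>x\<in>e. \<exists>y\<in>e. \<theta> x \<noteq> \<theta> y)" by blast
    define \<theta>' where "\<theta>' x = (if x \<in> A then \<theta> x else 0)" for x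
    have "\<theta>' \<in> K" unfolding K_def \<theta>'_def using th n by (auto simp: PiE_iff)
    moreover have "\<theta>' \<in> F e" if "e \<in> E'" for e
    proof -
      have "e \<subseteq> A" "e \<in> E" using that E' unfolding A_def by auto
      then obtain x y where "x\<in>e" "y\<in>e" "\<theta> x \<noteq> \<theta> y" using th by blast
      moreover have "\<theta>' x \<noteq> \<theta>' y" using calculation \<open>e \<subseteq> A\<close> unfolding \<theta>'_def by auto
      ultimately show ?thesis using \<open>\<theta>' \<in> K\<close> unfolding F_def by blast
    qed
    ultimately have "\<theta>' \<in> K \<inter> \<Inter>F'" using E'(3) by blast
    then show "K \<inter> \<Inter>F' \<noteq> {}" by blast
  qed
  then obtain \<theta> where th: "\<theta> \<in> K" "\<forall>e\<in>E. \<theta> \<in> F e" by blast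
  have "\<forall>x. \<theta> x < n" using th(1) unfolding K_def by (simp add: PiE_iff)
  moreover have "\<forall>e\<in>E. \<exists>x\<in>e. \<exists>y\<in>e. \<theta> x \<noteq> \<theta> y" using th(2) unfolding F_def by blast
  ultimately show ?thesis by blast
qed

definition ai :: "('a::real_vector \<Rightarrow> real) \<Rightarrow> ('a \<Rightarrow> 'a) \<Rightarrow> bool" where
  "ai N f \<longleftrightarrow> (\<exists>L t. lin_isometry N L \<and> f = (\<lambda>x. L x + t))"

lemma ai_id: "ai N (\<lambda>x. x)"
  unfolding ai_def lin_isometry_def
  by (rule exI[of _ "\<lambda>x. x"], rule exI[of _ 0]) (auto simp: linear_id[unfolded id_def])

lemma ai_comp: assumes "ai N f" "ai N g" shows "ai N (\<lambda>x. f (g x))"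
proof -
  obtain L t where L: "lin_isometry N L" "f = (\<lambda>x. L x + t)" using assms(1) unfolding ai_def by blast
  obtain L' t' where L': "lin_isometry N L'" "g = (\<lambda>x. L' x + t')" using assms(2) unfolding ai_def by blast
  have "lin_isometry N (\<lambda>x. L (L' x))"
  proof -
    have "linear (\<lambda>x. L (L' x))" using L(1) L'(1) linear_compose[of L' L] unfolding lin_isometry_def o_def by blast
    moreover have "surj (\<lambda>x. L (L' x))" using L(1) L'(1) unfolding lin_isometry_def using comp_surj[of L' L] by (simp add: o_def)
    moreover have "N (L (L' x)) = N x" for x using L(1) L'(1) unfolding lin_isometry_def by simp
    ultimately show ?thesis unfolding lin_isometry_def by blast
  qed
  moreover have "(\<lambda>x. f (g x)) = (\<lambda>x. L (L' x) + (L t' + t))"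
    using L L' unfolding lin_isometry_def by (auto simp: linear_add)
  ultimately show ?thesis unfolding ai_def by blast
qed

lemma is_norm_zero: "is_norm N \<Longrightarrow> N x = 0 \<longleftrightarrow> x = 0" unfolding is_norm_def by blast

lemma li_inj: assumes "is_norm N" "lin_isometry N L" shows "inj L"
proof (rule injI)
  fix x y assume "L x = L y"
  then have "L (x - y) = 0" using assms(2) unfolding lin_isometry_def by (simp add: linear_diff)
  then have "N (x - y) = 0" using assms unfolding lin_isometry_def by (metis is_norm_zero)
  then show "x = y" using is_norm_zero[OF assms(1)] by auto
qed

lemma ai_inj: assumes "is_norm N" "ai N f" shows "inj f"
  using assms li_inj unfolding ai_def inj_def by fastforce

lemma ai_surj: assumes "ai N f" shows "surj f"
proof -
  obtain L t where L: "lin_isometry N L" "f = (\<lambda>x. L x + t)" using assms(1) unfolding ai_def by blast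
  show ?thesis unfolding surj_def
  proof
    fix y obtain x where "y - t = L x" using L(1) unfolding lin_isometry_def by (metis surj_def)
    then show "\<exists>x. y = f x" using L(2) by (auto simp: algebra_simps)
  qed
qed

lemma ai_inv: assumes "is_norm N" "ai N f" shows "\<exists>g. ai N g \<and> (\<forall>x. g (f x) = x) \<and> (\<forall>y. f (g y) = y)"
proof -
  obtain L t where L: "lin_isometry N L" "f = (\<lambda>x. L x + t)" using assms(2) unfolding ai_def by blast
  have iL: "inj L" using li_inj[OF assms(1) L(1)] .
  have sL: "surj L" using L(1) unfolding lin_isometry_def by blast
  have lL: "linear L" using L(1) unfolding lin_isometry_def by blast
  define R where "R = inv L"
  have RL: "R (L x) = x" for x unfolding R_def using iL by simp
  have LR: "L (R y) = y" for y unfolding R_def using sL by (simp add: surj_f_inv_f)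
  have "linear R"
  proof (rule linearI)
    fix x y show "R (x + y) = R x + R y"
      using RL[of "R x + R y"] lL LR by (simp add: linear_add)
    fix c :: real show "R (c *\<^sub>R x) = c *\<^sub>R R x"
      using RL[of "c *\<^sub>R R x"] lL LR by (simp add: linear_scale)
  qed
  moreover have "surj R" using RL by (rule surjI)
  moreover have "N (R x) = N x" for x
  proof -
    have "N (L (R x)) = N (R x)" using L(1) unfolding lin_isometry_def by blast
    then show ?thesis using LR by simp
  qed
  ultimately have "lin_isometry N R" unfolding lin_isometry_def by blast
  then have "ai N (\<lambda>y. R y + (- R t))" unfolding ai_def by blast
  moreover have "R (f x) + (- R t) = x" for x using L(2) RL \<open>linear R\<close> by (simp add: linear_add)
  moreover have "f (R y + (- R t)) = y" for y using L(2) LR lL by (simp add: linear_add linear_neg linear_diff)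
  ultimately show ?thesis by blast
qed

lemma cong_normal: assumes "is_norm N" "congruent_in N X Y" shows "\<exists>f. ai N f \<and> X = f ` Y"
proof -
  obtain L t where L: "lin_isometry N L" and
    d: "Y = (\<lambda>x. L x + t) ` X \<or> Y = (\<lambda>x. L (x + t)) ` X \<or> X = (\<lambda>x. L x + t) ` Y \<or> X = (\<lambda>x. L (x + t)) ` Y"
    using assms(2) unfolding congruent_in_def by blast
  have e: "(\<lambda>x. L (x + t)) = (\<lambda>x. L x + L t)" using L unfolding lin_isometry_def by (auto simp: linear_add)
  have a1: "ai N (\<lambda>x. L x + t)" using L unfolding ai_def by blast
  have a2: "ai N (\<lambda>x. L (x + t))" using L unfolding ai_def e by blast
  have bk: "\<exists>f. ai N f \<and> X = f ` Y" if g1: "ai N g" and g2: "Y = g ` X" for g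
  proof -
    obtain h where h: "ai N h" "\<forall>x. h (g x) = x" using ai_inv[OF assms(1) g1] by blast
    have "X = h ` Y" using g2 h(2) by (auto simp: image_image)
    then show ?thesis using h(1) by blast
  qed
  show ?thesis using d a1 a2 bk by blast
qed

lemma cong_of: assumes "ai N f" shows "congruent_in N (f ` Y) Y"
  using assms unfolding ai_def congruent_in_def by blast

lemma cong_edges_iff: assumes "is_norm N"
  shows "X \<in> cong_edges N M \<longleftrightarrow> (\<exists>T\<in>M. \<exists>f. ai N f \<and> X = f ` T)"
  unfolding cong_edges_def using cong_normal[OF assms] cong_of by blast

lemma cong_edges_image: assumes "is_norm N" "X \<in> cong_edges N M" "ai N g"
  shows "g ` X \<in> cong_edges N M"
proof -
  obtain T f where "T \<in> M" "ai N f" "X = f ` T" using assms cong_edges_iff by blast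
  then have "g ` X = (\<lambda>x. g (f x)) ` T" "ai N (\<lambda>x. g (f x))" using ai_comp assms(3) by (auto simp: image_image)
  then show ?thesis using cong_edges_iff[OF assms(1)] \<open>T \<in> M\<close> by blast
qed

lemma ai_diff: assumes "ai N f" shows "N (f x - f y) = N (x - y)"
  using assms unfolding ai_def lin_isometry_def by (auto simp: linear_diff[symmetric])

lemma ai_translate: "ai N (\<lambda>x. x + v)"
  unfolding ai_def lin_isometry_def
  by (rule exI[of _ "\<lambda>x. x"], rule exI[of _ v]) (auto simp: linear_id[unfolded id_def])

lemma is_norm_scale: "is_norm N \<Longrightarrow> N (c *\<^sub>R x) = \<bar>c\<bar> * N x" unfolding is_norm_def by blast
lemma is_norm_tri: "is_norm N \<Longrightarrow> N (x + y) \<le> N x + N y" unfolding is_norm_def by blast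
lemma is_norm_0: "is_norm N \<Longrightarrow> N x = 0 \<longleftrightarrow> x = 0" unfolding is_norm_def by blast
lemma is_norm_nonneg: assumes "is_norm N" shows "N x \<ge> 0"
proof -
  have "N (x + (-1) *\<^sub>R x) \<le> N x + N ((-1) *\<^sub>R x)" using is_norm_tri[OF assms] .
  then have "0 \<le> 2 * N x" using is_norm_scale[OF assms, of "-1" x] is_norm_0[OF assms, of 0] by simp
  then show ?thesis by simp
qed
lemma is_norm_sym: assumes "is_norm N" shows "N (x - y) = N (y - x)"
  using is_norm_scale[OF assms, of "-1" "x - y"] by simp

lemma is_norm_sum: assumes "is_norm N" shows "N (sum f S) \<le> sum (\<lambda>i. N (f i)) S"
proof (induction S rule: infinite_finite_induct)
  case (infinite A) then show ?case using is_norm_0[OF assms, of 0] by simp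
next
  case empty then show ?case using is_norm_0[OF assms, of 0] by simp
next
  case (insert x F)
  then show ?case using is_norm_tri[OF assms, of "f x" "sum f F"] by simp
qed

lemma norm_upper:
  fixes N :: "real ^ 'd \<Rightarrow> real"
  assumes "is_norm N"
  shows "\<exists>B\<ge>0. \<forall>x. N x \<le> B * norm x"
proof -
  define B where "B = (\<Sum>i\<in>UNIV. N (axis i (1::real)))"
  have "B \<ge> 0" unfolding B_def using is_norm_nonneg[OF assms] by (simp add: sum_nonneg)
  moreover have "N x \<le> B * norm x" for x
  proof -
    have "x = (\<Sum>i\<in>UNIV. (x$i) *\<^sub>R axis i (1::real))"
      using basis_expansion[of x] by (simp add: scalar_mult_eq_scaleR)
    then have "N x \<le> (\<Sum>i\<in>UNIV. N ((x$i) *\<^sub>R axis i (1::real)))"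
      using is_norm_sum[OF assms] by metis
    also have "\<dots> = (\<Sum>i\<in>UNIV. \<bar>x$i\<bar> * N (axis i (1::real)))"
      using is_norm_scale[OF assms] by simp
    also have "\<dots> \<le> (\<Sum>i\<in>UNIV. norm x * N (axis i (1::real)))"
      by (rule sum_mono) (simp add: component_le_norm_cart is_norm_nonneg[OF assms] mult_right_mono)
    also have "\<dots> = B * norm x" unfolding B_def by (simp add: sum_distrib_left mult.commute)
    finally show ?thesis .
  qed
  ultimately show ?thesis by blast
qed

lemma norm_lower:
  fixes N :: "real ^ 'd \<Rightarrow> real"
  assumes "is_norm N"
  shows "\<exists>c>0. \<forall>x. c * norm x \<le> N x"
proof -
  obtain B where B: "B \<ge> 0" "\<forall>x. N x \<le> B * norm x" using norm_upper[OF assms] by blast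
  have lip: "\<bar>N x - N y\<bar> \<le> B * norm (x - y)" for x y
  proof -
    have "N x \<le> N y + N (x - y)" using is_norm_tri[OF assms, of y "x - y"] by simp
    moreover have "N y \<le> N x + N (y - x)" using is_norm_tri[OF assms, of x "y - x"] by simp
    moreover have "N (y - x) = N (x - y)" using is_norm_sym[OF assms] by simp
    moreover have "N (x - y) \<le> B * norm (x - y)" using B by blast
    ultimately show ?thesis by linarith
  qed
  have cont: "continuous_on UNIV N"
    unfolding continuous_on_iff
  proof (intro ballI allI impI)
    fix x :: "real^'d" and e :: real assume "e > 0"
    show "\<exists>d>0. \<forall>x'\<in>UNIV. dist x' x < d \<longrightarrow> dist (N x') (N x) < e"
    proof (intro exI[of _ "e / (B + 1)"] conjI ballI impI)
      show "e / (B + 1) > 0" using \<open>e > 0\<close> B by simp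
      fix x' :: "real^'d" assume "dist x' x < e / (B + 1)"
      then have "(B + 1) * norm (x' - x) < e" using B by (simp add: dist_norm field_simps)
      moreover have "B * norm (x' - x) \<le> (B + 1) * norm (x' - x)" by (simp add: mult_right_mono)
      ultimately show "dist (N x') (N x) < e" using lip[of x' x] by (simp add: dist_real_def)
    qed
  qed
  have ne: "sphere (0::real^'d) 1 \<noteq> {}"
  proof -
    obtain i :: 'd where True by blast
    have "axis i (1::real) \<in> sphere 0 1" by simp
    then show ?thesis by blast
  qed
  obtain x0 where x0: "x0 \<in> sphere (0::real^'d) 1" "\<forall>y\<in>sphere 0 1. N x0 \<le> N y"
    using continuous_attains_inf[OF compact_sphere ne continuous_on_subset[OF cont]] by blast
  have "x0 \<noteq> 0" using x0(1) by auto
  then have c0: "N x0 > 0" using is_norm_0[OF assms] is_norm_nonneg[OF assms] by (metis less_eq_real_def)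
  have "N x0 * norm x \<le> N x" for x
  proof (cases "x = 0")
    case True then show ?thesis using is_norm_nonneg[OF assms] by simp
  next
    case False
    have "(1 / norm x) *\<^sub>R x \<in> sphere 0 1" using False by simp
    then have "N x0 \<le> N ((1 / norm x) *\<^sub>R x)" using x0 by blast
    also have "\<dots> = N x / norm x" using is_norm_scale[OF assms] by simp
    finally show ?thesis using False by (simp add: field_simps)
  qed
  then show ?thesis using c0 by blast
qed

lemma floor_close:
  fixes u v :: real
  assumes "\<lfloor>u\<rfloor> = \<lfloor>v\<rfloor>" shows "\<bar>u - v\<bar> < 1"
  using assms by linarith

lemma floor_far:
  fixes u v :: real
  shows "\<bar>u - v\<bar> \<ge> \<bar>real_of_int (\<lfloor>u\<rfloor> - \<lfloor>v\<rfloor>)\<bar> - 1"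
  by linarith

lemma grid_coloring:
  fixes N :: "real^'d \<Rightarrow> real" and \<Delta> :: "real set"
  assumes nN: "is_norm N" and fD: "finite \<Delta>" and neD: "\<Delta> \<noteq> {}" and posD: "\<forall>\<delta>\<in>\<Delta>. \<delta> > 0"
  shows "\<exists>n. \<exists>\<theta> :: real^'d \<Rightarrow> nat. (\<forall>x. \<theta> x < n) \<and> (\<forall>x y. N (x - y) \<in> \<Delta> \<longrightarrow> \<theta> x \<noteq> \<theta> y)"
proof -
  obtain B where B: "B \<ge> 0" "\<forall>x. N x \<le> B * norm x" using norm_upper[OF nN] by blast
  obtain c where c: "c > 0" "\<forall>x. c * norm x \<le> N x" using norm_lower[OF nN] by blast
  define d where "d = real CARD('d)"
  have d0: "d \<ge> 0" unfolding d_def by simp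
  define dmin where "dmin = Min \<Delta>"
  define dmax where "dmax = Max \<Delta>"
  have dmin0: "dmin > 0" unfolding dmin_def using fD neD posD by auto
  have dminle: "dmin \<le> \<delta>" if "\<delta> \<in> \<Delta>" for \<delta> unfolding dmin_def using fD that by simp
  have dmaxge: "\<delta> \<le> dmax" if "\<delta> \<in> \<Delta>" for \<delta> unfolding dmax_def using fD that by simp
  define h where "h = dmin / ((B + 1) * (d + 1))"
  have h0: "h > 0" unfolding h_def using dmin0 B d0 by simp
  have hB: "B * d * h < dmin"
  proof -
    have "(B + 1) * (d + 1) * h = dmin" unfolding h_def using B d0 by simp
    moreover have "B * d < (B + 1) * (d + 1)" using B d0 by (simp add: algebra_simps)
    ultimately show ?thesis using h0 by (metis mult_strict_right_mono)
  qed
  define K :: int where "K = \<lceil>dmax / (c * h)\<rceil> + 2"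
  have "dmax > 0" using dmin0 dminle dmaxge neD by (meson ex_in_conv less_le_trans order_trans)
  then have "dmax / (c * h) > 0" using c h0 by simp
  moreover have "real_of_int \<lceil>dmax / (c * h)\<rceil> \<ge> dmax / (c * h)" by (rule le_of_int_ceiling)
  ultimately have "real_of_int \<lceil>dmax / (c * h)\<rceil> > 0" by linarith
  then have K2: "K \<ge> 2" unfolding K_def by simp
  have Kbig: "c * (real_of_int K - 1) * h > dmax"
  proof -
    have "real_of_int K - 1 > dmax / (c * h)" unfolding K_def by linarith
    then have "(real_of_int K - 1) * (c * h) > dmax" using c h0 by (simp add: field_simps)
    then show ?thesis by (simp add: algebra_simps)
  qed
  define col where "col x = (\<lambda>i. \<lfloor>x$i / h\<rfloor> mod K)" for x :: "real^'d"
  have key: "N (x - y) \<notin> \<Delta>" if "col x = col y" for x y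
  proof (cases "\<forall>i. \<lfloor>x$i / h\<rfloor> = \<lfloor>y$i / h\<rfloor>")
    case True
    have "\<bar>(x - y)$i\<bar> \<le> h" for i
    proof -
      have "\<bar>x$i / h - y$i / h\<bar> < 1" using True floor_close by blast
      moreover have "\<bar>x$i / h - y$i / h\<bar> = \<bar>x$i - y$i\<bar> / h" using h0 by (simp add: diff_divide_distrib[symmetric] abs_divide)
      ultimately have "\<bar>x$i - y$i\<bar> / h < 1" by simp
      then have "\<bar>x$i - y$i\<bar> < h" by (simp add: pos_divide_less_eq[OF h0])
      then show ?thesis by simp
    qed
    then have "(\<Sum>i\<in>UNIV. \<bar>(x - y)$i\<bar>) \<le> (\<Sum>i\<in>(UNIV::'d set). h)" by (intro sum_mono) auto
    then have "norm (x - y) \<le> d * h" using norm_le_l1_cart[of "x - y"] unfolding d_def by simp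
    then have "B * norm (x - y) \<le> B * (d * h)" using B(1) by (rule mult_left_mono)
    then have "N (x - y) \<le> B * (d * h)" using B(2) by (meson order_trans)
    then have "N (x - y) < dmin" using hB by (simp add: mult.assoc)
    then show ?thesis using dminle by fastforce
  next
    case False
    then obtain i where i: "\<lfloor>x$i / h\<rfloor> \<noteq> \<lfloor>y$i / h\<rfloor>" by blast
    have "\<lfloor>x$i / h\<rfloor> mod K = \<lfloor>y$i / h\<rfloor> mod K" using that unfolding col_def by meson
    then have "K dvd (\<lfloor>x$i / h\<rfloor> - \<lfloor>y$i / h\<rfloor>)" by (simp add: mod_eq_dvd_iff)
    then have "\<bar>K\<bar> \<le> \<bar>\<lfloor>x$i / h\<rfloor> - \<lfloor>y$i / h\<rfloor>\<bar>" using i by (intro dvd_imp_le_int) auto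
    then have "real_of_int K \<le> \<bar>real_of_int (\<lfloor>x$i / h\<rfloor> - \<lfloor>y$i / h\<rfloor>)\<bar>" using K2 by linarith
    then have "\<bar>x$i / h - y$i / h\<bar> \<ge> real_of_int K - 1" using floor_far[of "x$i / h" "y$i / h"] by linarith
    moreover have "\<bar>x$i / h - y$i / h\<bar> = \<bar>x$i - y$i\<bar> / h" using h0 by (simp add: diff_divide_distrib[symmetric] abs_divide)
    ultimately have "real_of_int K - 1 \<le> \<bar>x$i - y$i\<bar> / h" by simp
    then have "\<bar>x$i - y$i\<bar> \<ge> (real_of_int K - 1) * h" by (simp add: pos_le_divide_eq[OF h0])
    moreover have "\<bar>x$i - y$i\<bar> \<le> norm (x - y)" using component_le_norm_cart[of "x - y" i] by simp
    ultimately have "(real_of_int K - 1) * h \<le> norm (x - y)" by linarith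
    then have "c * ((real_of_int K - 1) * h) \<le> c * norm (x - y)" using c(1) by simp
    then have "c * ((real_of_int K - 1) * h) \<le> N (x - y)" using c(2) by (meson order_trans)
    then have "N (x - y) > dmax" using Kbig by (simp add: mult.assoc)
    then show ?thesis using dmaxge by fastforce
  qed
  define R where "R = range col"
  have "R \<subseteq> PiE UNIV (\<lambda>_. {0..<K})" unfolding R_def col_def using K2 by (auto simp: PiE_iff)
  then have fR: "finite R" by (rule finite_subset) (intro finite_PiE; simp)
  obtain g where g: "bij_betw g R {0..<card R}" using ex_bij_betw_finite_nat[OF fR] by blast
  define \<theta> where "\<theta> x = g (col x)" for x
  have "\<theta> x < card R" for x unfolding \<theta>_def using g unfolding R_def bij_betw_def by auto
  moreover have "\<theta> x \<noteq> \<theta> y" if "N (x - y) \<in> \<Delta>" for x y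
  proof
    assume "\<theta> x = \<theta> y"
    then have "col x = col y" using g unfolding \<theta>_def bij_betw_def inj_on_def R_def by blast
    then show False using key that by blast
  qed
  ultimately show ?thesis by blast
qed

definition nmc :: "'v set set \<Rightarrow> ('v \<Rightarrow> 'c) \<Rightarrow> bool" where
  "nmc E \<theta> \<longleftrightarrow> (\<forall>e\<in>E. \<exists>x\<in>e. \<exists>y\<in>e. \<theta> x \<noteq> \<theta> y)"

lemma nmc_encode:
  assumes "finite (range \<phi>)" "nmc E \<phi>"
  shows "\<exists>\<theta>::'v\<Rightarrow>nat. (\<forall>x. \<theta> x < card (range \<phi>)) \<and> nmc E \<theta>"
proof -
  obtain g where g: "bij_betw g (range \<phi>) {0..<card (range \<phi>)}" using ex_bij_betw_finite_nat[OF assms(1)] by blast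
  have "g (\<phi> x) < card (range \<phi>)" for x using g unfolding bij_betw_def by auto
  moreover have "nmc E (\<lambda>x. g (\<phi> x))" unfolding nmc_def
  proof
    fix e assume "e \<in> E"
    then obtain x y where xy: "x \<in> e" "y \<in> e" "\<phi> x \<noteq> \<phi> y" using assms(2) unfolding nmc_def by blast
    have "inj_on g (range \<phi>)" using g unfolding bij_betw_def by blast
    then have "g (\<phi> x) \<noteq> g (\<phi> y)" using xy(3) unfolding inj_on_def by blast
    then show "\<exists>x\<in>e. \<exists>y\<in>e. g (\<phi> x) \<noteq> g (\<phi> y)" using xy by blast
  qed
  ultimately show ?thesis by (intro exI[of _ "\<lambda>x. g (\<phi> x)"]) blast
qed

lemma infinite_UNIV_cart: "infinite (UNIV :: (real^'d) set)"
proof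
  assume fin: "finite (UNIV :: (real^'d) set)"
  obtain i :: 'd where True by blast
  have "inj (\<lambda>r::real. r *\<^sub>R axis i (1::real))"
    by (rule injI) (auto simp: axis_def vec_eq_iff dest: spec[of _ i])
  moreover have "finite (range (\<lambda>r::real. r *\<^sub>R axis i (1::real)))"
    using finite_subset[OF subset_UNIV fin] .
  ultimately have "finite (UNIV :: real set)" using finite_imageD by blast
  then show False using infinite_UNIV_char_0 by blast
qed

lemma avoid_translate:
  fixes A F :: "(real^'d) set"
  assumes "finite A" "finite F"
  shows "\<exists>v. (\<lambda>x. x + v) ` A \<inter> F = {}"
proof -
  have "finite ((\<lambda>(f,a). f - a) ` (F \<times> A))" using assms by auto
  then obtain v where v: "v \<notin> (\<lambda>(f,a). f - a) ` (F \<times> A)"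
    using ex_new_if_finite[OF infinite_UNIV_cart] by blast
  have "(\<lambda>x. x + v) ` A \<inter> F = {}"
  proof (rule ccontr)
    assume "(\<lambda>x. x + v) ` A \<inter> F \<noteq> {}"
    then obtain a where a: "a \<in> A" "a + v \<in> F" by blast
    then have "v \<in> (\<lambda>(f,a). f - a) ` (F \<times> A)" by (intro image_eqI[of _ _ "(a + v, a)"]) auto
    then show False using v by blast
  qed
  then show ?thesis by blast
qed

lemma translates:
  fixes A U :: "(real^'d) set" and n :: nat
  assumes "finite A" "finite U"
  shows "\<exists>vs. (\<forall>i<n. \<forall>j<n. i \<noteq> j \<longrightarrow> (\<lambda>x. x + vs i) ` A \<inter> (\<lambda>x. x + vs j) ` A = {})
            \<and> (\<forall>i<n. (\<lambda>x. x + vs i) ` A \<inter> U = {})"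
proof (induction n)
  case 0 then show ?case by simp
next
  case (Suc n)
  then obtain vs where vs: "\<forall>i<n. \<forall>j<n. i \<noteq> j \<longrightarrow> (\<lambda>x. x + vs i) ` A \<inter> (\<lambda>x. x + vs j) ` A = {}"
    "\<forall>i<n. (\<lambda>x. x + vs i) ` A \<inter> U = {}" by blast
  define F where "F = U \<union> (\<Union>i<n. (\<lambda>x. x + vs i) ` A)"
  have "finite F" unfolding F_def using assms by auto
  then obtain v where v: "(\<lambda>x. x + v) ` A \<inter> F = {}" using avoid_translate[OF assms(1)] by blast
  define vs' where "vs' = vs(n := v)"
  have "\<forall>i<Suc n. \<forall>j<Suc n. i \<noteq> j \<longrightarrow> (\<lambda>x. x + vs' i) ` A \<inter> (\<lambda>x. x + vs' j) ` A = {}"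
  proof (intro allI impI)
    fix i j assume ij: "i < Suc n" "j < Suc n" "i \<noteq> j"
    show "(\<lambda>x. x + vs' i) ` A \<inter> (\<lambda>x. x + vs' j) ` A = {}"
    proof (cases "i = n \<or> j = n")
      case True
      then show ?thesis
      proof
        assume "i = n" then have "j < n" using ij by auto
        then have "(\<lambda>x. x + vs j) ` A \<subseteq> F" unfolding F_def by blast
        moreover have e: "vs' i = v" "vs' j = vs j" using \<open>i = n\<close> \<open>j < n\<close> unfolding vs'_def by auto
        ultimately show ?thesis unfolding e using v by blast
      next
        assume "j = n" then have "i < n" using ij by auto
        then have "(\<lambda>x. x + vs i) ` A \<subseteq> F" unfolding F_def by blast
        moreover have e: "vs' j = v" "vs' i = vs i" using \<open>j = n\<close> \<open>i < n\<close> unfolding vs'_def by auto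
        ultimately show ?thesis unfolding e using v by blast
      qed
    next
      case False 
      then have e: "vs' i = vs i" "vs' j = vs j" and "i < n" "j < n" using ij unfolding vs'_def by auto
      then show ?thesis unfolding e using vs(1) ij(3) by blast
    qed
  qed
  moreover have "\<forall>i<Suc n. (\<lambda>x. x + vs' i) ` A \<inter> U = {}"
  proof (intro allI impI)
    fix i assume "i < Suc n"
    show "(\<lambda>x. x + vs' i) ` A \<inter> U = {}"
    proof (cases "i = n")
      case True then have e: "vs' i = v" unfolding vs'_def by simp
      have "U \<subseteq> F" unfolding F_def by blast
      then show ?thesis unfolding e using v by blast
    next
      case False then have e: "vs' i = vs i" and "i < n" using \<open>i < Suc n\<close> unfolding vs'_def by auto
      then show ?thesis unfolding e using vs(2) by blast
    qed
  qed
  ultimately show ?case by (intro exI[of _ vs'] conjI)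
qed

lemma proper_nmc: "proper_coloring V E C \<phi> \<longleftrightarrow> (\<forall>v\<in>V. \<phi> v \<in> C) \<and> nmc E \<phi>"
  unfolding proper_coloring_def nmc_def by blast

lemma hcc_char:
  fixes E :: "'v set set" and k :: nat and D :: "'v set"
  assumes inf: "infinite (UNIV::'v set)"
    and a: "\<And>D::'v set. colorable_with UNIV E D \<Longrightarrow> infinite D \<or> k \<le> card D"
    and b: "\<And>D::'v set. finite D \<Longrightarrow> card D = k \<Longrightarrow> colorable_with UNIV E D"
  shows "has_chromatic_card UNIV E D \<longleftrightarrow> finite D \<and> card D = k"
proof
  assume h: "has_chromatic_card UNIV E D"
  obtain D0 :: "'v set" where D0: "finite D0" "card D0 = k" using infinite_arbitrarily_large[OF inf] by blast
  have "(card_of D, card_of D0) \<in> ordLeq" using h b[OF D0] unfolding has_chromatic_card_def by blast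
  then have fD: "finite D" and "\<exists>f. inj_on f D \<and> f ` D \<subseteq> D0"
    using card_of_ordLeq_finite D0(1) card_of_ordLeq by blast+
  then have "card D \<le> k" using D0 card_inj_on_le by blast
  moreover have "colorable_with UNIV E D" using h unfolding has_chromatic_card_def by blast
  then have "infinite D \<or> k \<le> card D" by (rule a)
  then have "k \<le> card D" using fD by blast
  ultimately show "finite D \<and> card D = k" using fD by simp
next
  assume D: "finite D \<and> card D = k"
  have "colorable_with UNIV E D" using b D by blast
  moreover have "(card_of D, card_of D') \<in> ordLeq" if "colorable_with UNIV E D'" for D' :: "'v set"
  proof (cases "finite D'")
    case True
    then have "k \<le> card D'" using a that by blast
    then obtain f where "f ` D \<subseteq> D'" "inj_on f D" using card_le_inj[of D D'] D True by auto
    then show ?thesis using card_of_ordLeq by blast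
  next
    case False
    then obtain B where B: "finite B" "card B = k" "B \<subseteq> D'" using infinite_arbitrarily_large by blast
    then obtain f where "f ` D \<subseteq> B" "inj_on f D" using card_le_inj[of D B] D by auto
    then have "f ` D \<subseteq> D'" using B by blast
    then show ?thesis using card_of_ordLeq \<open>inj_on f D\<close> by blast
  qed
  ultimately show "has_chromatic_card UNIV E D" unfolding has_chromatic_card_def by blast
qed

locale hgsetup =
  fixes N :: "real^'d \<Rightarrow> real" and m :: nat and M :: "(real^'d) set set"
  assumes nN: "is_norm N" and m2: "m \<ge> 2" and fM: "finite M" and neM: "M \<noteq> {}"
    and gon: "\<forall>T\<in>M. is_gon m T"
begin

abbreviation "E1 \<equiv> cong_edges N M"

lemma E1_card: assumes "X \<in> E1" shows "finite X \<and> card X = m"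
proof -
  obtain T f where T: "T \<in> M" "ai N f" "X = f ` T" using assms cong_edges_iff[OF nN] by blast
  have "inj f" using ai_inj[OF nN T(2)] .
  then have "card X = card T" using T(3) by (simp add: card_image inj_on_subset)
  then show ?thesis using gon T unfolding is_gon_def by simp
qed

lemma E1_two: assumes "X \<in> E1" shows "\<exists>x\<in>X. \<exists>y\<in>X. x \<noteq> y"
proof -
  have X: "finite X" "card X = m" using E1_card[OF assms] by auto
  then have "X \<noteq> {}" using m2 by auto
  then obtain x where x: "x \<in> X" by blast
  have "card (X - {x}) = m - 1" using X x by simp
  then have "card (X - {x}) \<noteq> 0" using m2 by simp
  then have "X - {x} \<noteq> {}" by (metis card.empty)
  then obtain y where "y \<in> X" "y \<noteq> x" by blast
  then show ?thesis using x by blast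
qed

lemma M_sub_E1: assumes "T \<in> M" shows "T \<in> E1"
  unfolding cong_edges_iff[OF nN] by (intro bexI[of _ T] exI[of _ "\<lambda>x. x"]) (auto simp: ai_id assms)

lemma fin_col: "\<exists>n. \<exists>\<theta>::real^'d\<Rightarrow>nat. (\<forall>x. \<theta> x < n) \<and> nmc E1 \<theta>"
proof -
  define pr where "pr T = (SOME p. fst p \<in> T \<and> snd p \<in> T \<and> fst p \<noteq> snd p)" for T :: "(real^'d) set"
  have prT: "fst (pr T) \<in> T \<and> snd (pr T) \<in> T \<and> fst (pr T) \<noteq> snd (pr T)" if T: "T \<in> M" for T
  proof -
    obtain x y where "x \<in> T" "y \<in> T" "x \<noteq> y" using E1_two[OF M_sub_E1[OF T]] by blast
    then have "\<exists>p. fst p \<in> T \<and> snd p \<in> T \<and> fst p \<noteq> snd p" by (intro exI[of _ "(x,y)"]) simp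
    then show ?thesis unfolding pr_def by (rule someI_ex)
  qed
  define \<Delta> where "\<Delta> = (\<lambda>T. N (fst (pr T) - snd (pr T))) ` M"
  have fD: "finite \<Delta>" and neD: "\<Delta> \<noteq> {}" unfolding \<Delta>_def using fM neM by auto
  have posD: "\<forall>\<delta>\<in>\<Delta>. \<delta> > 0"
  proof
    fix \<delta> assume "\<delta> \<in> \<Delta>"
    then obtain T where T: "T \<in> M" "\<delta> = N (fst (pr T) - snd (pr T))" unfolding \<Delta>_def by blast
    then have "fst (pr T) - snd (pr T) \<noteq> 0" using prT by auto
    then show "\<delta> > 0" using T(2) is_norm_0[OF nN] is_norm_nonneg[OF nN] by (metis less_eq_real_def)
  qed
  obtain n and \<theta> :: "real^'d \<Rightarrow> nat" where th: "\<forall>x. \<theta> x < n" "\<forall>x y. N (x - y) \<in> \<Delta> \<longrightarrow> \<theta> x \<noteq> \<theta> y"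
    using grid_coloring[OF nN fD neD posD] by blast
  have "nmc E1 \<theta>" unfolding nmc_def
  proof
    fix X assume "X \<in> E1"
    then obtain T f where T: "T \<in> M" "ai N f" "X = f ` T" using cong_edges_iff[OF nN] by blast
    let ?a = "fst (pr T)" and ?b = "snd (pr T)"
    have "N (f ?a - f ?b) = N (?a - ?b)" using ai_diff[OF T(2)] .
    then have "N (f ?a - f ?b) \<in> \<Delta>" unfolding \<Delta>_def using T(1) by auto
    then have "\<theta> (f ?a) \<noteq> \<theta> (f ?b)" using th(2) by blast
    moreover have "f ?a \<in> X" "f ?b \<in> X" using prT[OF T(1)] T(3) by auto
    ultimately show "\<exists>x\<in>X. \<exists>y\<in>X. \<theta> x \<noteq> \<theta> y" by blast
  qed
  then show ?thesis using th(1) by (intro exI[of _ n] exI[of _ \<theta>]) blast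
qed

definition k where "k = (LEAST n. \<exists>\<theta>::real^'d\<Rightarrow>nat. (\<forall>x. \<theta> x < n) \<and> nmc E1 \<theta>)"

lemma K1: "\<exists>\<theta>::real^'d\<Rightarrow>nat. (\<forall>x. \<theta> x < k) \<and> nmc E1 \<theta>"
  unfolding k_def by (rule LeastI_ex) (rule fin_col)

lemma K2: fixes \<phi> :: "real^'d \<Rightarrow> 'c" assumes "nmc E1 \<phi>" "finite (range \<phi>)" shows "k \<le> card (range \<phi>)"
proof -
  have "\<exists>\<theta>::real^'d\<Rightarrow>nat. (\<forall>x. \<theta> x < card (range \<phi>)) \<and> nmc E1 \<theta>" by (rule nmc_encode[OF assms(2,1)])
  then show ?thesis unfolding k_def by (rule Least_le)
qed

lemma k2: "k \<ge> 2"
proof -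
  obtain \<theta> :: "real^'d\<Rightarrow>nat" where th: "\<forall>x. \<theta> x < k" "nmc E1 \<theta>" using K1 by blast
  obtain T where "T \<in> M" using neM by blast
  then obtain x y where "\<theta> x \<noteq> \<theta> y" using th(2) M_sub_E1 unfolding nmc_def by blast
  moreover have "\<theta> x < k" "\<theta> y < k" using th(1) by auto
  ultimately show ?thesis by linarith
qed

definition goodA where
  "goodA A \<longleftrightarrow> (\<forall>\<psi>::real^'d\<Rightarrow>nat. card (\<psi> ` A) < k \<longrightarrow> (\<exists>e\<in>E1. e \<subseteq> A \<and> (\<forall>x\<in>e. \<forall>y\<in>e. \<psi> x = \<psi> y)))"

lemma witness: "\<exists>A. finite A \<and> goodA A"
proof (rule ccontr)
  assume nA: "\<nexists>A. finite A \<and> goodA A"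
  have loc: "\<forall>A. finite A \<longrightarrow> (\<exists>\<theta>::real^'d\<Rightarrow>nat. (\<forall>x\<in>A. \<theta> x < k - 1) \<and> (\<forall>e\<in>E1. e \<subseteq> A \<longrightarrow> (\<exists>x\<in>e. \<exists>y\<in>e. \<theta> x \<noteq> \<theta> y)))"
  proof (intro allI impI)
    fix A :: "(real^'d) set" assume fA: "finite A"
    then have "\<not> goodA A" using nA by blast
    then obtain \<psi> :: "real^'d\<Rightarrow>nat" where psi: "card (\<psi> ` A) < k" "\<forall>e\<in>E1. e \<subseteq> A \<longrightarrow> \<not> (\<forall>x\<in>e. \<forall>y\<in>e. \<psi> x = \<psi> y)"
      unfolding goodA_def by blast
    have "finite (\<psi> ` A)" using fA by simp
    then obtain g where g: "bij_betw g (\<psi> ` A) {0..<card (\<psi> ` A)}" using ex_bij_betw_finite_nat by blast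
    have "g (\<psi> x) < k - 1" if "x \<in> A" for x
    proof -
      have "g (\<psi> x) < card (\<psi> ` A)" using g that unfolding bij_betw_def by auto
      then show ?thesis using psi(1) by linarith
    qed
    moreover have "\<exists>x\<in>e. \<exists>y\<in>e. g (\<psi> x) \<noteq> g (\<psi> y)" if eE: "e \<in> E1" "e \<subseteq> A" for e
    proof -
      obtain x y where xy: "x \<in> e" "y \<in> e" "\<psi> x \<noteq> \<psi> y" using psi(2) eE by blast
      have "inj_on g (\<psi> ` A)" using g unfolding bij_betw_def by blast
      then have "g (\<psi> x) \<noteq> g (\<psi> y)" using xy eE(2) unfolding inj_on_def by blast
      then show ?thesis using xy by blast
    qed
    ultimately show "\<exists>\<theta>::real^'d\<Rightarrow>nat. (\<forall>x\<in>A. \<theta> x < k - 1) \<and> (\<forall>e\<in>E1. e \<subseteq> A \<longrightarrow> (\<exists>x\<in>e. \<exists>y\<in>e. \<theta> x \<noteq> \<theta> y))"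
      by (intro exI[of _ "\<lambda>x. g (\<psi> x)"]) blast
  qed
  have fe: "\<forall>e\<in>E1. finite e" using E1_card by blast
  have "k - 1 > 0" using k2 by simp
  obtain \<theta> :: "real^'d\<Rightarrow>nat" where th: "\<forall>x. \<theta> x < k - 1" "\<forall>e\<in>E1. \<exists>x\<in>e. \<exists>y\<in>e. \<theta> x \<noteq> \<theta> y"
    using compactness_coloring[OF fe \<open>k - 1 > 0\<close> loc] by blast
  then have "\<exists>\<theta>::real^'d\<Rightarrow>nat. (\<forall>x. \<theta> x < k - 1) \<and> nmc E1 \<theta>" unfolding nmc_def by (intro exI[of _ \<theta>]) blast
  then have "k \<le> k - 1" unfolding k_def by (rule Least_le)
  then show False using k2 by linarith
qed

lemma goodA_image: assumes "goodA A" "ai N g" shows "goodA (g ` A)"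
  unfolding goodA_def
proof (intro allI impI)
  fix \<psi> :: "real^'d\<Rightarrow>nat" assume c: "card (\<psi> ` g ` A) < k"
  have H: "\<forall>\<psi>::real^'d\<Rightarrow>nat. card (\<psi> ` A) < k \<longrightarrow> (\<exists>e\<in>E1. e \<subseteq> A \<and> (\<forall>x\<in>e. \<forall>y\<in>e. \<psi> x = \<psi> y))"
    using assms(1) unfolding goodA_def .
  have "(\<lambda>x. \<psi> (g x)) ` A = \<psi> ` g ` A" by (simp add: image_image)
  then have "card ((\<lambda>x. \<psi> (g x)) ` A) < k" using c by simp
  then obtain e where e: "e \<in> E1" "e \<subseteq> A" "\<forall>x\<in>e. \<forall>y\<in>e. \<psi> (g x) = \<psi> (g y)"
    using H[rule_format, of "\<lambda>x. \<psi> (g x)"] by blast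
  have "g ` e \<in> E1" using cong_edges_image[OF nN e(1) assms(2)] .
  moreover have "g ` e \<subseteq> g ` A" using e(2) by blast
  moreover have "\<forall>x\<in>g ` e. \<forall>y\<in>g ` e. \<psi> x = \<psi> y" using e(3) by blast
  ultimately show "\<exists>e\<in>E1. e \<subseteq> g ` A \<and> (\<forall>x\<in>e. \<forall>y\<in>e. \<psi> x = \<psi> y)" by (intro bexI[of _ "g ` e"]) blast+
qed

end

context hgsetup
begin

lemma main_S:
  "\<exists>S. finite S \<and> (\<forall>T\<in>S. is_gon (m + 1) T) \<and> (\<forall>e\<in>cong_edges N S. \<exists>e'\<in>E1. e' \<subseteq> e)
     \<and> (\<forall>\<phi>::real^'d \<Rightarrow> 'c. nmc (cong_edges N S) \<phi> \<longrightarrow> finite (range \<phi>) \<longrightarrow> card (range \<phi>) \<le> k \<longrightarrow> nmc E1 \<phi>)"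
proof -
  obtain A where A: "finite A" "goodA A" using witness by blast
  define U where "U = \<Union>M"
  have fU: "finite U" unfolding U_def using fM gon unfolding is_gon_def by blast
  obtain vs where vs: "\<forall>i<k. \<forall>j<k. i \<noteq> j \<longrightarrow> (\<lambda>x. x + vs i) ` A \<inter> (\<lambda>x. x + vs j) ` A = {}"
    "\<forall>i<k. (\<lambda>x. x + vs i) ` A \<inter> U = {}" using translates[OF A(1) fU, of k] by blast
  define Aj where "Aj j = (\<lambda>x. x + vs j) ` A" for j
  define G where "G = U \<union> (\<Union>j<k. Aj j)"
  have fG: "finite G" unfolding G_def Aj_def using fU A(1) by simp
  define S where "S = {X. X \<subseteq> G \<and> card X = m + 1 \<and> (\<exists>Y\<in>E1. Y \<subseteq> X)}"
  define E2 where "E2 = cong_edges N S"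
  have fS: "finite S"
  proof -
    have "S \<subseteq> Pow G" unfolding S_def by blast
    then show ?thesis using finite_subset fG by (metis finite_Pow_iff)
  qed
  have gS: "\<forall>T\<in>S. is_gon (m + 1) T"
  proof
    fix T assume "T \<in> S"
    then have "T \<subseteq> G" "card T = m + 1" unfolding S_def by auto
    then show "is_gon (m + 1) T" unfolding is_gon_def using finite_subset[OF _ fG] by blast
  qed
  have F1: "\<forall>e\<in>E2. \<exists>e'\<in>E1. e' \<subseteq> e"
  proof
    fix e assume "e \<in> E2"
    then obtain X f where X: "X \<in> S" "ai N f" "e = f ` X" unfolding E2_def using cong_edges_iff[OF nN] by blast
    then obtain Y where Y: "Y \<in> E1" "Y \<subseteq> X" unfolding S_def by blast
    have "f ` Y \<in> E1" using cong_edges_image[OF nN Y(1) X(2)] .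
    moreover have "f ` Y \<subseteq> e" using X(3) Y(2) by blast
    ultimately show "\<exists>e'\<in>E1. e' \<subseteq> e" by blast
  qed
  have F2: "nmc E1 \<phi>" if nE2: "nmc E2 \<phi>" and fr: "finite (range \<phi>)" and cr: "card (range \<phi>) \<le> k"
    for \<phi> :: "real^'d \<Rightarrow> 'c"
  proof (rule ccontr)
    assume "\<not> nmc E1 \<phi>"
    then obtain e0 where e0: "e0 \<in> E1" "\<forall>x\<in>e0. \<forall>y\<in>e0. \<phi> x = \<phi> y" unfolding nmc_def by blast
    then obtain T g where Tg: "T \<in> M" "ai N g" "e0 = g ` T" using cong_edges_iff[OF nN] by blast
    have claim1: "\<phi> (g q) \<noteq> c" if Y: "Y \<in> E1" "Y \<subseteq> G" "\<forall>x\<in>Y. \<phi> (g x) = c" and q: "q \<in> G" "q \<notin> Y" for Y q c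
    proof
      assume qc: "\<phi> (g q) = c"
      define X where "X = insert q Y"
      have "X \<subseteq> G" unfolding X_def using Y q by blast
      moreover have "card X = m + 1" unfolding X_def using E1_card[OF Y(1)] q(2) by simp
      moreover have "Y \<subseteq> X" unfolding X_def by blast
      ultimately have "X \<in> S" unfolding S_def using Y(1) by blast
      then have "g ` X \<in> E2" unfolding E2_def cong_edges_def using cong_of[OF Tg(2)] by blast
      then obtain x y where "x \<in> g ` X" "y \<in> g ` X" "\<phi> x \<noteq> \<phi> y" using nE2 unfolding nmc_def by blast
      moreover have "\<forall>z\<in>g ` X. \<phi> z = c" unfolding X_def using Y(3) qc by blast
      ultimately show False by simp
    qed
    have TG: "T \<subseteq> G" unfolding G_def U_def using Tg(1) by blast
    have TE1: "T \<in> E1" using M_sub_E1[OF Tg(1)] .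
    obtain x0 where x0: "x0 \<in> T" using E1_two[OF TE1] by blast
    define c0 where "c0 = \<phi> (g x0)"
    have Tc0: "\<forall>x\<in>T. \<phi> (g x) = c0" unfolding c0_def using e0(2) Tg(3) x0 by blast
    have AjG: "Aj j \<subseteq> G" if "j < k" for j unfolding G_def using that by blast
    have AjT: "Aj j \<inter> T = {}" if "j < k" for j using vs(2) that TG Tg(1) unfolding Aj_def U_def by blast
    have notc0: "\<phi> (g q) \<noteq> c0" if "q \<in> Aj j" "j < k" for q j
      using claim1[OF TE1 TG Tc0] that AjG AjT by blast
    obtain h where h: "bij_betw h (range \<phi>) {0..<card (range \<phi>)}" using ex_bij_betw_finite_nat[OF fr] by blast
    have hinj: "inj_on h (range \<phi>)" using h unfolding bij_betw_def by blast
    obtain gi where gi: "ai N gi" "\<forall>x. gi (g x) = x" "\<forall>y. g (gi y) = y" using ai_inv[OF nN Tg(2)] by blast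
    have c0r: "c0 \<in> range \<phi>" unfolding c0_def by simp
    have ex: "\<exists>Y. Y \<in> E1 \<and> Y \<subseteq> Aj j \<and> (\<forall>x\<in>Y. \<forall>y\<in>Y. \<phi> (g x) = \<phi> (g y))" if j: "j < k" for j
    proof -
      have "goodA (Aj j)" unfolding Aj_def using goodA_image[OF A(2) ai_translate] .
      then have gd: "goodA (g ` Aj j)" using goodA_image Tg(2) by blast
      define \<psi> where "\<psi> x = h (\<phi> x)" for x
      have "\<phi> ` g ` Aj j \<subseteq> range \<phi> - {c0}" using notc0[OF _ j] by blast
      then have "card (\<phi> ` g ` Aj j) \<le> card (range \<phi> - {c0})" using fr by (intro card_mono) auto
      also have "\<dots> = card (range \<phi>) - 1" using c0r fr by simp
      finally have c1: "card (\<phi> ` g ` Aj j) < k" using cr k2 by linarith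
      have "\<psi> ` g ` Aj j = h ` (\<phi> ` g ` Aj j)" unfolding \<psi>_def by (simp add: image_image)
      moreover have "inj_on h (\<phi> ` g ` Aj j)" using hinj by (rule inj_on_subset) blast
      ultimately have "card (\<psi> ` g ` Aj j) = card (\<phi> ` g ` Aj j)" by (simp add: card_image)
      then have "card (\<psi> ` g ` Aj j) < k" using c1 by simp
      then obtain e where e: "e \<in> E1" "e \<subseteq> g ` Aj j" "\<forall>x\<in>e. \<forall>y\<in>e. \<psi> x = \<psi> y"
        using gd[unfolded goodA_def, rule_format, of \<psi>] by blast
      have econst: "\<forall>x\<in>e. \<forall>y\<in>e. \<phi> x = \<phi> y"
      proof (intro ballI)
        fix x y assume "x \<in> e" "y \<in> e"
        then have "h (\<phi> x) = h (\<phi> y)" using e(3) unfolding \<psi>_def by blast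
        then show "\<phi> x = \<phi> y" using hinj unfolding inj_on_def by blast
      qed
      define Y where "Y = gi ` e"
      have "Y \<in> E1" unfolding Y_def using cong_edges_image[OF nN e(1) gi(1)] .
      moreover have "Y \<subseteq> Aj j"
      proof
        fix y assume "y \<in> Y"
        then obtain x where "x \<in> e" "y = gi x" unfolding Y_def by blast
        then obtain q where "q \<in> Aj j" "x = g q" using e(2) by blast
        then show "y \<in> Aj j" using \<open>y = gi x\<close> gi(2) by simp
      qed
      moreover have "\<forall>x\<in>Y. \<forall>y\<in>Y. \<phi> (g x) = \<phi> (g y)"
      proof (intro ballI)
        fix x y assume "x \<in> Y" "y \<in> Y"
        then obtain x' y' where "x' \<in> e" "y' \<in> e" "x = gi x'" "y = gi y'" unfolding Y_def by blast
        then have "g x = x'" "g y = y'" using gi(3) by simp_all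
        moreover have "\<phi> x' = \<phi> y'" using econst \<open>x' \<in> e\<close> \<open>y' \<in> e\<close> by blast
        ultimately show "\<phi> (g x) = \<phi> (g y)" by simp
      qed
      ultimately show ?thesis by (intro exI[of _ Y]) blast
    qed
    have "\<forall>j. \<exists>Y. j < k \<longrightarrow> Y \<in> E1 \<and> Y \<subseteq> Aj j \<and> (\<forall>x\<in>Y. \<forall>y\<in>Y. \<phi> (g x) = \<phi> (g y))"
    proof
      fix j show "\<exists>Y. j < k \<longrightarrow> Y \<in> E1 \<and> Y \<subseteq> Aj j \<and> (\<forall>x\<in>Y. \<forall>y\<in>Y. \<phi> (g x) = \<phi> (g y))"
      proof (cases "j < k")
        case True then show ?thesis using ex[OF True] by blast
      next
        case False then show ?thesis by blast
      qed
    qed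
    then have "\<exists>Yf. \<forall>j. j < k \<longrightarrow> Yf j \<in> E1 \<and> Yf j \<subseteq> Aj j \<and> (\<forall>x\<in>Yf j. \<forall>y\<in>Yf j. \<phi> (g x) = \<phi> (g y))"
      by (rule choice)
    then obtain Yf where Yf: "\<forall>j. j < k \<longrightarrow> Yf j \<in> E1 \<and> Yf j \<subseteq> Aj j \<and> (\<forall>x\<in>Yf j. \<forall>y\<in>Yf j. \<phi> (g x) = \<phi> (g y))"
      by (elim exE)
    define yj where "yj j = (SOME y. y \<in> Yf j)" for j
    have yjY: "yj j \<in> Yf j" if jk: "j < k" for j
    proof -
      have "Yf j \<in> E1" using Yf jk by blast
      then obtain y where "y \<in> Yf j" using E1_two by blast
      then show ?thesis unfolding yj_def by (rule someI)
    qed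
    define cj where "cj j = \<phi> (g (yj j))" for j
    have Ycj: "\<forall>x\<in>Yf j. \<phi> (g x) = cj j" if "j < k" for j
      unfolding cj_def using Yf yjY[OF that] that by blast
    have "inj_on cj {..<k}"
    proof (rule inj_onI)
      fix i j assume ij: "i \<in> {..<k}" "j \<in> {..<k}" "cj i = cj j"
      show "i = j"
      proof (rule ccontr)
        assume "i \<noteq> j"
        have yi: "yj i \<in> Aj i" using yjY Yf ij(1) by blast
        then have "yj i \<notin> Aj j" using vs(1) ij(1,2) \<open>i \<noteq> j\<close> unfolding Aj_def by blast
        then have "yj i \<notin> Yf j" using Yf ij(2) by blast
        moreover have "yj i \<in> G" using yi AjG ij(1) by blast
        moreover have "Yf j \<subseteq> G" using Yf AjG ij(2) by blast
        ultimately have "\<phi> (g (yj i)) \<noteq> cj j" using claim1[of "Yf j" "cj j" "yj i"] Yf Ycj ij(2) by blast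
        then show False using ij(3) unfolding cj_def by simp
      qed
    qed
    moreover have "cj ` {..<k} \<subseteq> range \<phi> - {c0}"
    proof
      fix c assume "c \<in> cj ` {..<k}"
      then obtain j where j: "j < k" "c = cj j" by blast
      have "yj j \<in> Aj j" using yjY[OF j(1)] Yf j(1) by blast
      then show "c \<in> range \<phi> - {c0}" using notc0 j unfolding cj_def by blast
    qed
    ultimately have "card {..<k} \<le> card (range \<phi> - {c0})" using fr by (intro card_inj_on_le) auto
    then have "k \<le> card (range \<phi>) - 1" using c0r fr by simp
    then show False using cr k2 by linarith
  qed
  show ?thesis
    apply (rule exI[of _ S])
    using fS gS F1 F2 unfolding E2_def by blast
qed


lemma final:
  "\<exists>S :: (real ^ 'd) set set. finite S \<and> (\<forall>T\<in>S. is_gon (m + 1) T) \<and>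
           hg_equivalent UNIV (cong_edges N M) (cong_edges N S)"
proof -
  obtain S where S: "finite S" "\<forall>T\<in>S. is_gon (m + 1) T" "\<forall>e\<in>cong_edges N S. \<exists>e'\<in>E1. e' \<subseteq> e"
    "\<forall>\<phi>::real^'d \<Rightarrow> real^'d. nmc (cong_edges N S) \<phi> \<longrightarrow> finite (range \<phi>) \<longrightarrow> card (range \<phi>) \<le> k \<longrightarrow> nmc E1 \<phi>"
    using main_S[where 'c = "real^'d"] by blast
  define E2 where "E2 = cong_edges N S"
  have F1: "nmc E2 \<phi>" if n1: "nmc E1 \<phi>" for \<phi> :: "real^'d \<Rightarrow> real^'d"
    unfolding nmc_def
  proof
    fix e assume "e \<in> E2"
    then obtain e' where "e' \<in> E1" "e' \<subseteq> e" using S(3) unfolding E2_def by blast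
    then obtain x y where "x \<in> e'" "y \<in> e'" "\<phi> x \<noteq> \<phi> y" using n1 unfolding nmc_def by blast
    then show "\<exists>x\<in>e. \<exists>y\<in>e. \<phi> x \<noteq> \<phi> y" using \<open>e' \<subseteq> e\<close> by blast
  qed
  have F2: "nmc E1 \<phi>" if "nmc E2 \<phi>" "finite (range \<phi>)" "card (range \<phi>) \<le> k" for \<phi> :: "real^'d \<Rightarrow> real^'d"
    using S(4) that unfolding E2_def by blast
  have a1: "infinite D \<or> k \<le> card D" if "colorable_with UNIV E1 D" for D :: "(real^'d) set"
  proof (cases "finite D")
    case True
    obtain \<phi> where "proper_coloring UNIV E1 D \<phi>" using \<open>colorable_with UNIV E1 D\<close> unfolding colorable_with_def by blast
    then have p: "range \<phi> \<subseteq> D" "nmc E1 \<phi>" unfolding proper_nmc by auto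
    then have "finite (range \<phi>)" using True finite_subset by blast
    then have "k \<le> card (range \<phi>)" using K2 p(2) by blast
    also have "\<dots> \<le> card D" using p(1) True by (rule card_mono[rotated])
    finally show ?thesis by blast
  qed simp
  have a2: "infinite D \<or> k \<le> card D" if "colorable_with UNIV E2 D" for D :: "(real^'d) set"
  proof (cases "finite D")
    case True
    show ?thesis
    proof (rule ccontr)
      assume "\<not> (infinite D \<or> k \<le> card D)"
      then have lt: "card D < k" by simp
      obtain \<phi> where "proper_coloring UNIV E2 D \<phi>" using \<open>colorable_with UNIV E2 D\<close> unfolding colorable_with_def by blast
      then have p: "range \<phi> \<subseteq> D" "nmc E2 \<phi>" unfolding proper_nmc by auto
      then have fr: "finite (range \<phi>)" using True finite_subset by blast
      have cr: "card (range \<phi>) \<le> card D" using p(1) True by (rule card_mono[rotated])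
      then have "nmc E1 \<phi>" using F2 p(2) fr lt by simp
      then have "k \<le> card (range \<phi>)" using K2 fr by blast
      then show False using cr lt by linarith
    qed
  qed simp
  have b1: "colorable_with UNIV E1 D" if fD: "finite D" and cD: "card D = k" for D :: "(real^'d) set"
  proof -
    obtain \<theta> :: "real^'d \<Rightarrow> nat" where th: "\<forall>x. \<theta> x < k" "nmc E1 \<theta>" using K1 by blast
    obtain h where h: "bij_betw h {0..<card D} D" using ex_bij_betw_nat_finite[OF fD] by blast
    have "h (\<theta> x) \<in> D" for x using h th(1) cD unfolding bij_betw_def by auto
    moreover have "nmc E1 (\<lambda>x. h (\<theta> x))" unfolding nmc_def
    proof
      fix e assume "e \<in> E1"
      then obtain x y where xy: "x \<in> e" "y \<in> e" "\<theta> x \<noteq> \<theta> y" using th(2) unfolding nmc_def by blast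
      have "inj_on h {0..<card D}" using h unfolding bij_betw_def by blast
      moreover have "\<theta> x \<in> {0..<card D}" "\<theta> y \<in> {0..<card D}" using th(1) cD by auto
      ultimately have "h (\<theta> x) \<noteq> h (\<theta> y)" using xy(3) inj_onD by metis
      then show "\<exists>x\<in>e. \<exists>y\<in>e. h (\<theta> x) \<noteq> h (\<theta> y)" using xy by blast
    qed
    ultimately have "proper_coloring UNIV E1 D (\<lambda>x. h (\<theta> x))" unfolding proper_nmc by blast
    then show ?thesis unfolding colorable_with_def by (intro exI[of _ "\<lambda>x. h (\<theta> x)"])
  qed
  have b2: "colorable_with UNIV E2 D" if fD: "finite D" and cD: "card D = k" for D :: "(real^'d) set"
  proof -
    obtain \<phi> where "proper_coloring UNIV E1 D \<phi>" using b1[OF fD cD] unfolding colorable_with_def by blast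
    then have "proper_coloring UNIV E2 D \<phi>" unfolding proper_nmc using F1 by blast
    then show ?thesis unfolding colorable_with_def by (intro exI[of _ \<phi>])
  qed
  have h1: "has_chromatic_card UNIV E1 D \<longleftrightarrow> finite D \<and> card D = k" for D :: "(real^'d) set"
    by (rule hcc_char[OF infinite_UNIV_cart]) (use a1 b1 in blast)+
  have h2: "has_chromatic_card UNIV E2 D \<longleftrightarrow> finite D \<and> card D = k" for D :: "(real^'d) set"
    by (rule hcc_char[OF infinite_UNIV_cart]) (use a2 b2 in blast)+
  have "hg_equivalent UNIV E1 E2"
    unfolding hg_equivalent_def
  proof (intro conjI allI impI)
    fix D :: "(real^'d) set"
    show "has_chromatic_card UNIV E1 D \<longleftrightarrow> has_chromatic_card UNIV E2 D" using h1 h2 by simp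
  next
    fix C :: "(real^'d) set" and \<phi> :: "real^'d \<Rightarrow> real^'d"
    assume "has_chromatic_card UNIV E1 C"
    then have C: "finite C" "card C = k" using h1 by auto
    show "proper_coloring UNIV E1 C \<phi> \<longleftrightarrow> proper_coloring UNIV E2 C \<phi>"
    proof
      assume "proper_coloring UNIV E1 C \<phi>"
      then show "proper_coloring UNIV E2 C \<phi>" unfolding proper_nmc using F1 by blast
    next
      assume "proper_coloring UNIV E2 C \<phi>"
      then have p: "range \<phi> \<subseteq> C" "nmc E2 \<phi>" unfolding proper_nmc by auto
      then have fr: "finite (range \<phi>)" using C(1) finite_subset by blast
      have "card (range \<phi>) \<le> k" using card_mono[OF C(1) p(1)] C(2) by simp
      then have "nmc E1 \<phi>" using F2 p(2) fr by blast
      then show "proper_coloring UNIV E1 C \<phi>" unfolding proper_nmc using p(1) by blast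
    qed
  qed
  then show ?thesis using S(1,2) unfolding E2_def by blast
qed

end

theorem theorem4p3:
  fixes N :: "real ^ 'd \<Rightarrow> real" and m :: nat and M :: "(real ^ 'd) set set"
  assumes "is_norm N" and "m \<ge> 2"
    and "finite M" and "M \<noteq> {}" and "\<forall>T\<in>M. is_gon m T"
  shows "\<exists>S :: (real ^ 'd) set set. finite S \<and> (\<forall>T\<in>S. is_gon (m + 1) T) \<and>
           hg_equivalent UNIV (cong_edges N M) (cong_edges N S)"
proof -
  interpret hgsetup N m M using assms by unfold_locales
  show ?thesis by (rule final)
qed

end
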